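(* Let $\Phi$ be a real $C^1$-function on an open interval $J$ and let $\mathsf b>0$. Let $\Gamma_\Phi$ be the family of curves in the curvilinear rectangle $R_{J,\Phi,\mathsf b}=\{x+iy: y\in J,\ x\in(\Phi(y),\Phi(y)+\mathsf b)\}$ which join its two horizontal sides. Suppose $|\Phi'|\le C$ on $J$. Then $$\lambda(\Gamma_\Phi)\le(1+C^2)\,\lambda(\Gamma_0),$$ where $\Gamma_0$ is the family corresponding to the function identically equal to zero.
   Context: Ahlfors' extremal length of a family $\Gamma$ of (unions of countably many locally rectifiable) curves: for a non-negative measurable function $\varrho$ on $\mathbb{C}$ let $A(\varrho)=\iint\varrho^2\,dx\,dy$, $L_\gamma(\varrho)=\int_\gamma\varrho|dz|$ (set to $\infty$ if $\varrho$ is not measurable on $\gamma$ with respect to arc length), $L(\varrho)=\inf_{\gamma\in\Gamma}L_\gamma(\varrho)$; then $\lambda(\Gamma)=\sup_\varrho L(\varrho)^2/A(\varrho)$ over $\varrho$ with $0<A(\varrho)<\infty$. The horizontal sides of $R_{J,\Phi,\mathsf b}$ are the curves $\{x+iy: x\in(\Phi(y),\Phi(y)+\mathsf b)\}$ for $y$ the endpoints of $J$. *)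

theory Defs
  imports "HOL-Analysis.Analysis"
begin

definition curve_var :: "(real \<Rightarrow> complex) \<Rightarrow> real \<Rightarrow> real \<Rightarrow> ennreal" where
  "curve_var \<gamma> u v =
     (SUP (n, t) \<in> {(n::nat, t::nat \<Rightarrow> real). t 0 = u \<and> t n = v \<and> (\<forall>i<n. t i \<le> t (Suc i))}.
        ennreal (\<Sum>i<n. cmod (\<gamma> (t (Suc i)) - \<gamma> (t i))))"

definition arclen_fun :: "(real \<Rightarrow> complex) \<Rightarrow> real \<Rightarrow> real \<Rightarrow> real \<Rightarrow> real" where
  "arclen_fun \<gamma> u v t = enn2real (curve_var \<gamma> u (max u (min v t)))"

definition arclen_measure :: "(real \<Rightarrow> complex) \<Rightarrow> real \<Rightarrow> real \<Rightarrow> real measure" where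
  "arclen_measure \<gamma> u v = completion (interval_measure (arclen_fun \<gamma> u v))"

definition loc_rectifiable :: "(real \<Rightarrow> complex) \<Rightarrow> bool" where
  "loc_rectifiable \<gamma> \<longleftrightarrow> (\<forall>u v. 0 < u \<longrightarrow> u \<le> v \<longrightarrow> v < 1 \<longrightarrow> curve_var \<gamma> u v < \<infinity>)"

(* L_gamma(rho) = int_gamma rho |dz|, infinity if rho is not arc-length measurable on gamma *)
definition curve_rho_length :: "(complex \<Rightarrow> real) \<Rightarrow> (real \<Rightarrow> complex) \<Rightarrow> ennreal" where
  "curve_rho_length \<rho> \<gamma> =
     (if (\<forall>u v. 0 < u \<longrightarrow> u \<le> v \<longrightarrow> v < 1 \<longrightarrow>
            (\<lambda>t. \<rho> (\<gamma> t)) \<in> borel_measurable (arclen_measure \<gamma> u v))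
      then (SUP (u, v) \<in> {(u, v). 0 < u \<and> u \<le> v \<and> v < 1}.
              \<integral>\<^sup>+ t. ennreal (\<rho> (\<gamma> t)) \<partial>(arclen_measure \<gamma> u v))
      else \<infinity>)"

definition rho_area :: "(complex \<Rightarrow> real) \<Rightarrow> ennreal" where
  "rho_area \<rho> = (\<integral>\<^sup>+ z. ennreal ((\<rho> z)\<^sup>2) \<partial>lebesgue)"

definition family_rho_length :: "(real \<Rightarrow> complex) set \<Rightarrow> (complex \<Rightarrow> real) \<Rightarrow> ennreal" where
  "family_rho_length \<Gamma> \<rho> = (INF \<gamma> \<in> \<Gamma>. curve_rho_length \<rho> \<gamma>)"

definition admissible_metric :: "(complex \<Rightarrow> real) \<Rightarrow> bool" where
  "admissible_metric \<rho> \<longleftrightarrow> (\<forall>z. 0 \<le> \<rho> z) \<and> \<rho> \<in> borel_measurable lebesgue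
      \<and> 0 < rho_area \<rho> \<and> rho_area \<rho> < \<infinity>"

definition extremal_length :: "(real \<Rightarrow> complex) set \<Rightarrow> ennreal" where
  "extremal_length \<Gamma> =
     (SUP \<rho> \<in> {\<rho>. admissible_metric \<rho>}. (family_rho_length \<Gamma> \<rho>)\<^sup>2 / rho_area \<rho>)"

definition curv_rect :: "real \<Rightarrow> real \<Rightarrow> (real \<Rightarrow> real) \<Rightarrow> real \<Rightarrow> complex set" where
  "curv_rect a1 a2 \<Phi> bb = {z. a1 < Im z \<and> Im z < a2 \<and> \<Phi> (Im z) < Re z \<and> Re z < \<Phi> (Im z) + bb}"

definition horiz_side :: "(real \<Rightarrow> real) \<Rightarrow> real \<Rightarrow> real \<Rightarrow> complex set" where
  "horiz_side \<Phi> bb y = {z. Im z = y \<and> \<Phi> y < Re z \<and> Re z < \<Phi> y + bb}"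

definition joining_family :: "real \<Rightarrow> real \<Rightarrow> (real \<Rightarrow> real) \<Rightarrow> real \<Rightarrow> (real \<Rightarrow> complex) set" where
  "joining_family a1 a2 \<Phi> bb =
     {\<gamma>. continuous_on {0..1} \<gamma> \<and> loc_rectifiable \<gamma>
        \<and> (\<forall>t\<in>{0<..<1}. \<gamma> t \<in> curv_rect a1 a2 \<Phi> bb)
        \<and> ((\<gamma> 0 \<in> horiz_side \<Phi> bb a1 \<and> \<gamma> 1 \<in> horiz_side \<Phi> bb a2)
           \<or> (\<gamma> 0 \<in> horiz_side \<Phi> bb a2 \<and> \<gamma> 1 \<in> horiz_side \<Phi> bb a1))}"

end

theory Submission
  imports Defs
begin


definition psum :: "(real \<Rightarrow> complex) \<Rightarrow> nat \<Rightarrow> (nat \<Rightarrow> real) \<Rightarrow> real" where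
  "psum \<gamma> n t = (\<Sum>i<n. cmod (\<gamma> (t (Suc i)) - \<gamma> (t i)))"

definition ispart :: "real \<Rightarrow> real \<Rightarrow> nat \<Rightarrow> (nat \<Rightarrow> real) \<Rightarrow> bool" where
  "ispart u v n t \<longleftrightarrow> t 0 = u \<and> t n = v \<and> (\<forall>i<n. t i \<le> t (Suc i))"

lemma curve_var_alt:
  "curve_var \<gamma> u v = (SUP p \<in> {p. ispart u v (fst p) (snd p)}. ennreal (psum \<gamma> (fst p) (snd p)))"
  unfolding curve_var_def ispart_def psum_def
  by (rule SUP_cong) (auto simp: case_prod_beta)

lemma psum_le_var: "ispart u v n t \<Longrightarrow> ennreal (psum \<gamma> n t) \<le> curve_var \<gamma> u v"
  unfolding curve_var_alt by (rule SUP_upper2[where i="(n,t)"]) auto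

lemma var_leI: "(\<And>n t. ispart u v n t \<Longrightarrow> ennreal (psum \<gamma> n t) \<le> X) \<Longrightarrow> curve_var \<gamma> u v \<le> X"
  unfolding curve_var_alt by (rule SUP_least) auto

lemma chain_mono:
  assumes "\<forall>i<n. t i \<le> t (Suc i)" "i \<le> j" "j \<le> n"
  shows "(t i :: real) \<le> t j"
  using assms(2,3)
proof (induction j)
  case 0 then show ?case by simp
next
  case (Suc j)
  show ?case
  proof (cases "i = Suc j")
    case True then show ?thesis by simp
  next
    case False
    then have "i \<le> j" using Suc by simp
    then have "t i \<le> t j" using Suc by simp
    also have "t j \<le> t (Suc j)" using assms(1) Suc by simp
    finally show ?thesis .
  qed
qed

lemma part_bounds:
  assumes "ispart u v n t" "i \<le> n"
  shows "u \<le> t i" "t i \<le> v"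
  using chain_mono[of n t 0 i] chain_mono[of n t i n] assms unfolding ispart_def by auto

lemma part_uv: "ispart u v n t \<Longrightarrow> u \<le> v"
  using part_bounds[of u v n t 0] by (auto simp: ispart_def)

lemma psum_nonneg: "0 \<le> psum \<gamma> n t"
  unfolding psum_def by (auto intro: sum_nonneg)

lemma var_ge_dist:
  assumes "u \<le> v" shows "ennreal (cmod (\<gamma> v - \<gamma> u)) \<le> curve_var \<gamma> u v"
proof -
  have "ispart u v 1 (\<lambda>i. if i = 0 then u else v)" using assms by (auto simp: ispart_def)
  from psum_le_var[OF this, of \<gamma>] show ?thesis by (simp add: psum_def)
qed

lemma var_refl: "curve_var \<gamma> u u = 0"
proof -
  have "curve_var \<gamma> u u \<le> 0"
  proof (rule var_leI)
    fix n t assume p: "ispart u u n t"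
    have "\<forall>i\<le>n. t i = u" using part_bounds[OF p] by force
    then have "psum \<gamma> n t = 0" unfolding psum_def by (auto intro!: sum.neutral)
    then show "ennreal (psum \<gamma> n t) \<le> 0" by simp
  qed
  then show ?thesis by simp
qed

lemma var_lipschitz:
  assumes "u \<le> v" "\<And>s t. u \<le> s \<Longrightarrow> s \<le> t \<Longrightarrow> t \<le> v \<Longrightarrow> cmod (\<gamma> t - \<gamma> s) \<le> K * (t - s)"
  shows "curve_var \<gamma> u v \<le> ennreal (K * (v - u))"
proof (rule var_leI)
  fix n t assume p: "ispart u v n t"
  have "psum \<gamma> n t \<le> (\<Sum>i<n. K * (t (Suc i) - t i))"
    unfolding psum_def
  proof (rule sum_mono)
    fix i assume "i \<in> {..<n}"
    then show "cmod (\<gamma> (t (Suc i)) - \<gamma> (t i)) \<le> K * (t (Suc i) - t i)"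
      using part_bounds[OF p, of i] part_bounds[OF p, of "Suc i"] p
      by (intro assms(2)) (auto simp: ispart_def)
  qed
  also have "\<dots> = K * (t n - t 0)"
    by (simp add: sum_distrib_left[symmetric] sum_lessThan_telescope)
  also have "\<dots> = K * (v - u)" using p by (simp add: ispart_def)
  finally show "ennreal (psum \<gamma> n t) \<le> ennreal (K * (v - u))" by (rule ennreal_leI)
qed



lemma sum_lessThan_add_split:
  fixes f :: "nat \<Rightarrow> 'a::comm_monoid_add"
  shows "(\<Sum>i<a+b. f i) = (\<Sum>i<a. f i) + (\<Sum>i<b. f (a+i))"
  by (induction b) (auto simp: add.assoc)

lemma SUP_add_SUP:
  fixes f g :: "_ \<Rightarrow> ennreal"
  assumes "I \<noteq> {}" "J \<noteq> {}"
  shows "(SUP i\<in>I. f i) + (SUP j\<in>J. g j) = (SUP i\<in>I. SUP j\<in>J. f i + g j)"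
proof -
  have "(SUP i\<in>I. f i) + (SUP j\<in>J. g j) = (SUP i\<in>I. f i + (SUP j\<in>J. g j))"
    using assms by (simp add: ennreal_SUP_add_left)
  also have "\<dots> = (SUP i\<in>I. SUP j\<in>J. f i + g j)"
    using assms by (simp add: ennreal_SUP_add_right)
  finally show ?thesis .
qed

lemma part_concat:
  assumes p1: "ispart u w n t" and p2: "ispart w v m s"
  shows "\<exists>N r. ispart u v N r \<and> psum \<gamma> N r = psum \<gamma> n t + psum \<gamma> m s"
proof -
  define r where "r i = (if i \<le> n then t i else s (i - n))" for i
  have r2: "r (n + j) = s j" for j
    using p1 p2 by (cases j) (auto simp: r_def ispart_def)
  have "ispart u v (n+m) r"
    unfolding ispart_def
  proof (intro conjI allI impI)
    show "r 0 = u" using p1 by (simp add: r_def ispart_def)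
    show "r (n+m) = v" using r2[of m] p2 by (simp add: ispart_def)
    fix i assume i: "i < n + m"
    show "r i \<le> r (Suc i)"
    proof (cases "i < n")
      case True then show ?thesis using p1 by (auto simp: r_def ispart_def)
    next
      case False
      then obtain j where j: "i = n + j" "j < m" using i by (metis add_less_cancel_left le_iff_add not_less)
      then show ?thesis using r2[of j] r2[of "Suc j"] p2 by (auto simp: ispart_def)
    qed
  qed
  moreover have "psum \<gamma> (n+m) r = psum \<gamma> n t + psum \<gamma> m s"
    unfolding psum_def sum_lessThan_add_split
    using r2 by (auto simp: r_def intro!: sum.cong)
  ultimately show ?thesis by blast
qed

lemma part_split:
  assumes p: "ispart u v n t" and w: "u \<le> w" "w \<le> v"
  shows "\<exists>n1 t1 n2 t2. ispart u w n1 t1 \<and> ispart w v n2 t2 \<and> n1 \<le> n \<and>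
           psum \<gamma> n t \<le> psum \<gamma> n1 t1 + psum \<gamma> n2 t2"
proof (cases "w = u")
  case True
  have "ispart u w 0 (\<lambda>_. u)" using True by (simp add: ispart_def)
  moreover have "ispart w v n t" using p True by simp
  ultimately show ?thesis by (intro exI[of _ 0] exI[of _ "\<lambda>_. u"] exI[of _ n] exI[of _ t])
                              (auto simp: psum_def)
next
  case False
  then have uw: "u < w" using w by simp
  define j where "j = (LEAST j. w \<le> t j)"
  have tn: "w \<le> t n" using p w by (simp add: ispart_def)
  have jn: "j \<le> n" unfolding j_def by (rule Least_le) (rule tn)
  have wj: "w \<le> t j" unfolding j_def by (rule LeastI) (rule tn)
  have j0: "j \<noteq> 0"
  proof
    assume "j = 0" with wj have "w \<le> t 0" by simp
    with p uw show False by (simp add: ispart_def)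
  qed
  then obtain k where k: "j = Suc k" by (cases j) auto
  have tk: "t k < w"
  proof (rule ccontr)
    assume "\<not> t k < w"
    then have "j \<le> k" unfolding j_def by (intro Least_le) simp
    then show False using k by simp
  qed
  have kn: "k < n" using jn k by simp
  then obtain m where m: "n = Suc k + m" by (metis Suc_leI le_iff_add)
  define t1 where "t1 i = (if i \<le> k then t i else w)" for i
  define t2 where "t2 i = (if i = 0 then w else t (k + i))" for i
  have P1: "ispart u w (Suc k) t1"
    unfolding ispart_def t1_def
  proof (intro conjI allI impI)
    fix i assume "i < Suc k"
    then show "(if i \<le> k then t i else w) \<le> (if Suc i \<le> k then t (Suc i) else w)"
    proof (cases "Suc i \<le> k")
      case True then show ?thesis using p kn by (auto simp: ispart_def)
    next
      case False then have "i = k" using \<open>i < Suc k\<close> by simp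
      then show ?thesis using tk False by simp
    qed
  qed (use p in \<open>auto simp: ispart_def\<close>)
  have P2: "ispart w v (Suc m) t2"
    unfolding ispart_def t2_def using p wj k m by (auto simp: ispart_def)
  have s1: "psum \<gamma> (Suc k) t1 = (\<Sum>i<k. cmod (\<gamma> (t (Suc i)) - \<gamma> (t i))) + cmod (\<gamma> w - \<gamma> (t k))"
    unfolding psum_def by (auto simp: t1_def intro!: sum.cong)
  have s2: "psum \<gamma> (Suc m) t2 = cmod (\<gamma> (t (Suc k)) - \<gamma> w) + (\<Sum>i<m. cmod (\<gamma> (t (Suc k + Suc i)) - \<gamma> (t (Suc k + i))))"
    unfolding psum_def sum.lessThan_Suc_shift by (auto simp: t2_def intro!: sum.cong)
  have s: "psum \<gamma> n t = (\<Sum>i<k. cmod (\<gamma> (t (Suc i)) - \<gamma> (t i))) + cmod (\<gamma> (t (Suc k)) - \<gamma> (t k))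
      + (\<Sum>i<m. cmod (\<gamma> (t (Suc k + Suc i)) - \<gamma> (t (Suc k + i))))"
    unfolding psum_def m sum_lessThan_add_split by simp
  have tri: "cmod (\<gamma> (t (Suc k)) - \<gamma> (t k)) \<le> cmod (\<gamma> w - \<gamma> (t k)) + cmod (\<gamma> (t (Suc k)) - \<gamma> w)"
    using norm_triangle_ineq[of "\<gamma> w - \<gamma> (t k)" "\<gamma> (t (Suc k)) - \<gamma> w"] by simp
  have "psum \<gamma> n t \<le> psum \<gamma> (Suc k) t1 + psum \<gamma> (Suc m) t2"
    unfolding s s1 s2 using tri by simp
  then show ?thesis using P1 P2 kn by (intro exI[of _ "Suc k"] exI[of _ t1] exI[of _ "Suc m"] exI[of _ t2]) auto
qed

lemma part_nonempty: "u \<le> v \<Longrightarrow> {p. ispart u v (fst p) (snd p)} \<noteq> {}"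
proof -
  assume "u \<le> v"
  then have "(1, \<lambda>i::nat. if i = 0 then u else v) \<in> {p. ispart u v (fst p) (snd p)}"
    by (auto simp: ispart_def)
  then show ?thesis by blast
qed

lemma var_additive:
  assumes "u \<le> w" "w \<le> v"
  shows "curve_var \<gamma> u v = curve_var \<gamma> u w + curve_var \<gamma> w v"
proof (rule antisym)
  show "curve_var \<gamma> u v \<le> curve_var \<gamma> u w + curve_var \<gamma> w v"
  proof (rule var_leI)
    fix n t assume "ispart u v n t"
    from part_split[OF this assms, of \<gamma>] obtain n1 t1 n2 t2 where
      "ispart u w n1 t1" "ispart w v n2 t2" "psum \<gamma> n t \<le> psum \<gamma> n1 t1 + psum \<gamma> n2 t2" by blast
    then have "ennreal (psum \<gamma> n t) \<le> ennreal (psum \<gamma> n1 t1) + ennreal (psum \<gamma> n2 t2)"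
      by (simp add: ennreal_plus[symmetric] psum_nonneg ennreal_leI del: ennreal_plus)
    also have "\<dots> \<le> curve_var \<gamma> u w + curve_var \<gamma> w v"
      by (intro add_mono psum_le_var) fact+
    finally show "ennreal (psum \<gamma> n t) \<le> curve_var \<gamma> u w + curve_var \<gamma> w v" .
  qed
next
  have "curve_var \<gamma> u w + curve_var \<gamma> w v = 
    (SUP p \<in> {p. ispart u w (fst p) (snd p)}. SUP q \<in> {p. ispart w v (fst p) (snd p)}.
        ennreal (psum \<gamma> (fst p) (snd p)) + ennreal (psum \<gamma> (fst q) (snd q)))"
    unfolding curve_var_alt
    by (rule SUP_add_SUP) (use part_nonempty[of u w] part_nonempty[of w v] assms in auto)
  also have "\<dots> \<le> curve_var \<gamma> u v"
  proof (intro SUP_least)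
    fix p q assume P: "p \<in> {p. ispart u w (fst p) (snd p)}" and Q: "q \<in> {p. ispart w v (fst p) (snd p)}"
    from part_concat[of u w "fst p" "snd p" v "fst q" "snd q" \<gamma>] P Q obtain N r where
      "ispart u v N r" "psum \<gamma> N r = psum \<gamma> (fst p) (snd p) + psum \<gamma> (fst q) (snd q)"
      by blast
    then show "ennreal (psum \<gamma> (fst p) (snd p)) + ennreal (psum \<gamma> (fst q) (snd q)) \<le> curve_var \<gamma> u v"
      using psum_le_var[of u v N r \<gamma>] by (simp add: ennreal_plus[symmetric] psum_nonneg del: ennreal_plus)
  qed
  finally show "curve_var \<gamma> u w + curve_var \<gamma> w v \<le> curve_var \<gamma> u v" .
qed

lemma var_mono: "u \<le> w \<Longrightarrow> w \<le> v \<Longrightarrow> curve_var \<gamma> u w \<le> curve_var \<gamma> u v"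
  using var_additive[of u w v \<gamma>] by simp



lemma var_finite_sub:
  assumes "curve_var \<gamma> u v < \<infinity>" "u \<le> a" "a \<le> b" "b \<le> v"
  shows "curve_var \<gamma> a b < \<infinity>"
proof -
  have "curve_var \<gamma> a b \<le> curve_var \<gamma> a v" using var_mono assms by blast
  also have "\<dots> \<le> curve_var \<gamma> u v" using var_additive[of u a v \<gamma>] assms by simp
  finally show ?thesis using assms(1) by simp
qed

lemma var_right_small:
  assumes cont: "\<forall>e>0. \<exists>d>0. \<forall>s. t \<le> s \<and> s < t + d \<longrightarrow> cmod (\<gamma> s - \<gamma> t) < e"
    and fin: "curve_var \<gamma> t v < \<infinity>" and tv: "t < v" and e: "0 < \<epsilon>"
  shows "\<exists>\<delta>>0. \<forall>s. t \<le> s \<and> s \<le> v \<and> s < t + \<delta> \<longrightarrow> curve_var \<gamma> t s < ennreal \<epsilon>"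
proof (cases "curve_var \<gamma> t v < ennreal \<epsilon>")
  case True
  then show ?thesis using var_mono[of t _ v \<gamma>] by (intro exI[of _ 1]) (auto intro: le_less_trans)
next
  case False
  define V where "V = enn2real (curve_var \<gamma> t v)"
  have V: "curve_var \<gamma> t v = ennreal V" using fin by (simp add: V_def less_top ennreal_enn2real)
  have V0: "0 \<le> V" by (simp add: V_def)
  have "\<epsilon> \<le> V" using False V V0 by (simp add: not_less)
  then have "ennreal (V - \<epsilon>/2) < curve_var \<gamma> t v" using e V 
    by (simp add: ennreal_lessI)
  then obtain p where p: "ispart t v (fst p) (snd p)" and pV: "ennreal (V - \<epsilon>/2) < ennreal (psum \<gamma> (fst p) (snd p))"
    unfolding curve_var_alt less_SUP_iff by blast
  define n where "n = fst p"
  define \<tau> where "\<tau> = snd p"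
  have P: "ispart t v n \<tau>" using p by (simp add: n_def \<tau>_def)
  have PV: "V - \<epsilon>/2 < psum \<gamma> n \<tau>" using pV
    unfolding n_def \<tau>_def by (meson ennreal_leI not_le)
  define \<eta> where "\<eta> = \<epsilon> / (4 * (real n + 1))"
  have eta: "0 < \<eta>" using e by (simp add: \<eta>_def)
  obtain d where d: "d > 0" "\<And>s. t \<le> s \<Longrightarrow> s < t + d \<Longrightarrow> cmod (\<gamma> s - \<gamma> t) < \<eta>"
    using cont eta by blast
  show ?thesis
  proof (intro exI[of _ d] conjI allI impI)
    fix s assume s: "t \<le> s \<and> s \<le> v \<and> s < t + d"
    from part_split[OF P, of s \<gamma>] s obtain n1 t1 n2 t2 where
      P1: "ispart t s n1 t1" and P2: "ispart s v n2 t2" and n1: "n1 \<le> n"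
      and le: "psum \<gamma> n \<tau> \<le> psum \<gamma> n1 t1 + psum \<gamma> n2 t2" by blast
    have "psum \<gamma> n1 t1 \<le> (\<Sum>i<n1. 2 * \<eta>)"
      unfolding psum_def
    proof (rule sum_mono)
      fix i assume i: "i \<in> {..<n1}"
      have a: "cmod (\<gamma> (t1 (Suc i)) - \<gamma> t) < \<eta>"
        using part_bounds[OF P1, of "Suc i"] i s by (intro d(2)) auto
      have b: "cmod (\<gamma> (t1 i) - \<gamma> t) < \<eta>"
        using part_bounds[OF P1, of i] i s by (intro d(2)) auto
      have "cmod (\<gamma> (t1 (Suc i)) - \<gamma> (t1 i)) \<le> cmod (\<gamma> (t1 (Suc i)) - \<gamma> t) + cmod (\<gamma> (t1 i) - \<gamma> t)"
        using norm_triangle_ineq4[of "\<gamma> (t1 (Suc i)) - \<gamma> t" "\<gamma> (t1 i) - \<gamma> t"] by simp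
      then show "cmod (\<gamma> (t1 (Suc i)) - \<gamma> (t1 i)) \<le> 2 * \<eta>" using a b by simp
    qed
    also have "\<dots> = real n1 * 2 * \<eta>" by simp
    also have "\<dots> \<le> real n * 2 * \<eta>" using n1 eta by (simp add: mult_right_mono)
    also have "\<dots> < \<epsilon>/2"
    proof -
      have "real n * 2 * \<eta> = \<epsilon>/2 * (real n / (real n + 1))" by (simp add: \<eta>_def field_simps)
      also have "\<dots> < \<epsilon>/2 * 1" using e by (intro mult_strict_left_mono) auto
      finally show ?thesis by simp
    qed
    finally have s1: "psum \<gamma> n1 t1 < \<epsilon>/2" .
    have fs: "curve_var \<gamma> s v < \<infinity>" using var_finite_sub[OF fin, of s v] s by simp
    have ft: "curve_var \<gamma> t s < \<infinity>" using var_finite_sub[OF fin, of t s] s by simp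
    have "ennreal (psum \<gamma> n2 t2) \<le> curve_var \<gamma> s v" by (rule psum_le_var[OF P2])
    moreover have eqs: "curve_var \<gamma> s v = ennreal (enn2real (curve_var \<gamma> s v))"
      using fs by (simp add: ennreal_enn2real less_top[symmetric])
    ultimately have s2: "psum \<gamma> n2 t2 \<le> enn2real (curve_var \<gamma> s v)"
      by (metis enn2real_nonneg ennreal_le_iff)
    have add: "V = enn2real (curve_var \<gamma> t s) + enn2real (curve_var \<gamma> s v)"
      unfolding V_def using var_additive[of t s v \<gamma>] s fs ft
      by (simp add: enn2real_plus less_top)
    have "enn2real (curve_var \<gamma> t s) < \<epsilon>" using add s1 s2 le PV by argo
    moreover have eqt: "curve_var \<gamma> t s = ennreal (enn2real (curve_var \<gamma> t s))"
      using ft by (simp add: ennreal_enn2real less_top[symmetric])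
    ultimately show "curve_var \<gamma> t s < ennreal \<epsilon>"
      by (metis enn2real_nonneg ennreal_less_iff)
  qed (use d in auto)
qed



definition clampuv :: "real \<Rightarrow> real \<Rightarrow> real \<Rightarrow> real" where
  "clampuv u v x = max u (min v x)"

lemma arclen_fun_clamp: "arclen_fun \<gamma> u v x = enn2real (curve_var \<gamma> u (clampuv u v x))"
  by (simp add: arclen_fun_def clampuv_def)

lemma arclen_diff:
  assumes uv: "u \<le> v" and fin: "curve_var \<gamma> u v < \<infinity>" and xy: "x \<le> y"
  shows "arclen_fun \<gamma> u v y - arclen_fun \<gamma> u v x = enn2real (curve_var \<gamma> (clampuv u v x) (clampuv u v y))"
proof -
  let ?a = "clampuv u v x" and ?b = "clampuv u v y"
  have ab: "u \<le> ?a" "?a \<le> ?b" "?b \<le> v" using uv xy by (auto simp: clampuv_def)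
  have "curve_var \<gamma> u ?b = curve_var \<gamma> u ?a + curve_var \<gamma> ?a ?b" using var_additive ab by blast
  moreover have "curve_var \<gamma> u ?a < \<infinity>" "curve_var \<gamma> ?a ?b < \<infinity>"
    using var_finite_sub[OF fin] ab by auto
  ultimately show ?thesis by (simp add: arclen_fun_clamp enn2real_plus less_top)
qed

lemma arclen_mono:
  assumes uv: "u \<le> v" and fin: "curve_var \<gamma> u v < \<infinity>" and xy: "x \<le> y"
  shows "arclen_fun \<gamma> u v x \<le> arclen_fun \<gamma> u v y"
  using arclen_diff[OF assms] by (metis diff_ge_0_iff_ge enn2real_nonneg)

lemma arclen_rcont:
  assumes uv: "u \<le> v" and fin: "curve_var \<gamma> u v < \<infinity>"
    and rc: "\<And>t. u \<le> t \<Longrightarrow> t < v \<Longrightarrow> \<forall>e>0. \<exists>d>0. \<forall>s. t \<le> s \<and> s < t + d \<longrightarrow> cmod (\<gamma> s - \<gamma> t) < e"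
  shows "continuous (at_right a) (arclen_fun \<gamma> u v)"
proof (subst continuous_at_right_real_increasing)
  show "\<And>x y. x \<le> y \<Longrightarrow> arclen_fun \<gamma> u v x \<le> arclen_fun \<gamma> u v y" using arclen_mono[OF uv fin] .
  show "\<forall>\<epsilon>>0. \<exists>\<delta>>0. arclen_fun \<gamma> u v (a + \<delta>) - arclen_fun \<gamma> u v a < \<epsilon>"
  proof (intro allI impI)
    fix \<epsilon> :: real assume e: "0 < \<epsilon>"
    show "\<exists>\<delta>>0. arclen_fun \<gamma> u v (a + \<delta>) - arclen_fun \<gamma> u v a < \<epsilon>"
    proof (cases "a < u")
      case True
      then have "clampuv u v (a + (u - a)) = u" "clampuv u v a = u" using uv by (auto simp: clampuv_def)
      then show ?thesis using True e arclen_diff[OF uv fin, of a "a + (u - a)"]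
        by (intro exI[of _ "u - a"]) (auto simp: var_refl)
    next
      case False
      show ?thesis
      proof (cases "v \<le> a")
        case True
        then have "clampuv u v (a + 1) = v" "clampuv u v a = v" using uv by (auto simp: clampuv_def)
        then show ?thesis using True e arclen_diff[OF uv fin, of a "a + 1"]
          by (intro exI[of _ 1]) (auto simp: var_refl)
      next
        case av: False
        have fa: "curve_var \<gamma> a v < \<infinity>" using var_finite_sub[OF fin, of a v] False av by simp
        obtain \<delta> where d: "\<delta> > 0" "\<And>s. a \<le> s \<and> s \<le> v \<and> s < a + \<delta> \<Longrightarrow> curve_var \<gamma> a s < ennreal \<epsilon>"
        proof -
          have "\<forall>e>0. \<exists>d>0. \<forall>s. a \<le> s \<and> s < a + d \<longrightarrow> cmod (\<gamma> s - \<gamma> a) < e"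
            using rc[of a] False av by auto
          from var_right_small[OF this fa _ e] False av show ?thesis using that by auto
        qed
        define d' where "d' = min (\<delta>/2) (v - a)"
        have d': "d' > 0" "a + d' \<le> v" "a + d' < a + \<delta>" using d av by (auto simp: d'_def)
        have cl: "clampuv u v (a + d') = a + d'" "clampuv u v a = a" using d' False av
          by (auto simp: clampuv_def)
        have lt: "curve_var \<gamma> a (a + d') < ennreal \<epsilon>" using d(2)[of "a + d'"] d' by simp
        have "enn2real (curve_var \<gamma> a (a + d')) < \<epsilon>"
          using lt by (subst enn2real_less_iff) (auto simp: less_top[symmetric] dest: order.strict_trans)
        then show ?thesis using arclen_diff[OF uv fin, of a "a + d'"] d' cl
          by (intro exI[of _ d']) auto
      qed
    qed
  qed
qed

lemma interval_measure_outside_null: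
  fixes F :: "real \<Rightarrow> real"
  assumes mono: "\<And>x y. x \<le> y \<Longrightarrow> F x \<le> F y" and rc: "\<And>a. continuous (at_right a) F"
    and lo: "\<And>x. x \<le> u \<Longrightarrow> F x = F u" and hi: "\<And>x. v \<le> x \<Longrightarrow> F x = F v"
  shows "- {u<..v} \<in> null_sets (interval_measure F)"
proof -
  have eq: "- {u<..v} = (\<Union>n::nat. {u - real n<..u}) \<union> (\<Union>n::nat. {max u v<..max u v + real n})"
  proof (intro set_eqI iffI)
    fix x assume "x \<in> - {u<..v}"
    then have "x \<le> u \<or> v < x" by auto
    then show "x \<in> (\<Union>n::nat. {u - real n<..u}) \<union> (\<Union>n::nat. {max u v<..max u v + real n})"
    proof
      assume "x \<le> u"
      obtain n :: nat where "u - x < n" using reals_Archimedean2 by blast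
      then have "x \<in> {u - real n<..u}" using \<open>x \<le> u\<close> by auto
      then show ?thesis by blast
    next
      assume vx: "v < x"
      show ?thesis
      proof (cases "x \<le> u")
        case True
        obtain n :: nat where "u - x < n" using reals_Archimedean2 by blast
        then have "x \<in> {u - real n<..u}" using True by auto
        then show ?thesis by blast
      next
        case False
        obtain n :: nat where "x - max u v < n" using reals_Archimedean2 by blast
        then have "x \<in> {max u v<..max u v + real n}" using False vx by (auto simp: max_def)
        then show ?thesis by blast
      qed
    qed
  next
    fix x assume "x \<in> (\<Union>n::nat. {u - real n<..u}) \<union> (\<Union>n::nat. {max u v<..max u v + real n})"
    then show "x \<in> - {u<..v}" by auto
  qed
  have n1: "{u - real n<..u} \<in> null_sets (interval_measure F)" for n
    using emeasure_interval_measure_Ioc[of "u - real n" u F] mono rc lo[of "u - real n"]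
    by (auto simp: null_sets_def)
  have n2: "{max u v<..max u v + real n} \<in> null_sets (interval_measure F)" for n
    using emeasure_interval_measure_Ioc[of "max u v" "max u v + real n" F] mono rc hi[of "max u v"]
      hi[of "max u v + real n"]
    by (auto simp: null_sets_def)
  show ?thesis unfolding eq using n1 n2 by (intro null_sets.Un null_sets_UN) auto
qed



lemma cont_right_from_on:
  fixes \<gamma> :: "real \<Rightarrow> complex" and t :: real
  assumes c: "continuous_on {0..1} \<gamma>" and t: "0 \<le> t" "t < 1"
  shows "\<forall>e>0. \<exists>d>0. \<forall>s. t \<le> s \<and> s < t + d \<longrightarrow> cmod (\<gamma> s - \<gamma> t) < e"
proof (intro allI impI)
  fix e :: real assume e: "0 < e"
  from c t e obtain d where d: "d > 0" "\<And>x'. x' \<in> {0..1} \<Longrightarrow> dist x' t < d \<Longrightarrow> dist (\<gamma> x') (\<gamma> t) < e"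
    unfolding continuous_on_iff by (metis atLeastAtMost_iff less_eq_real_def)
  show "\<exists>d>0. \<forall>s. t \<le> s \<and> s < t + d \<longrightarrow> cmod (\<gamma> s - \<gamma> t) < e"
    using d t by (intro exI[of _ "min d (1 - t)"]) (auto simp: dist_norm)
qed

lemma arclen_good:
  assumes c: "continuous_on {0..1} \<gamma>" and lr: "loc_rectifiable \<gamma>" and uv: "0 < u" "u \<le> v" "v < 1"
  shows "curve_var \<gamma> u v < \<infinity>"
    and "\<And>x y. x \<le> y \<Longrightarrow> arclen_fun \<gamma> u v x \<le> arclen_fun \<gamma> u v y"
    and "\<And>a. continuous (at_right a) (arclen_fun \<gamma> u v)"
proof -
  show fin: "curve_var \<gamma> u v < \<infinity>" using lr uv by (simp add: loc_rectifiable_def)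
  show "\<And>x y. x \<le> y \<Longrightarrow> arclen_fun \<gamma> u v x \<le> arclen_fun \<gamma> u v y" by (rule arclen_mono[OF uv(2) fin])
  show "\<And>a. continuous (at_right a) (arclen_fun \<gamma> u v)"
    by (rule arclen_rcont[OF uv(2) fin]) (use cont_right_from_on[OF c] uv in auto)
qed

lemma emeasure_arclen_Ioc:
  assumes c: "continuous_on {0..1} \<gamma>" and lr: "loc_rectifiable \<gamma>" and uv: "0 < u" "u \<le> v" "v < 1"
  shows "emeasure (arclen_measure \<gamma> u v) {u<..v} = curve_var \<gamma> u v"
proof -
  have "emeasure (arclen_measure \<gamma> u v) {u<..v} = emeasure (interval_measure (arclen_fun \<gamma> u v)) {u<..v}"
    unfolding arclen_measure_def by (simp add: emeasure_completion)
  also have "\<dots> = ennreal (arclen_fun \<gamma> u v v - arclen_fun \<gamma> u v u)"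
    using arclen_good[OF assms] uv by (intro emeasure_interval_measure_Ioc) auto
  also have "arclen_fun \<gamma> u v v - arclen_fun \<gamma> u v u = enn2real (curve_var \<gamma> u v)"
    using uv by (simp add: arclen_fun_def var_refl)
  also have "ennreal \<dots> = curve_var \<gamma> u v" using arclen_good(1)[OF assms] by simp
  finally show ?thesis .
qed

lemma curve_len_lower:
  assumes g: "\<gamma> \<in> joining_family a1 a2 \<Phi> bb"
    and rho: "\<And>z. z \<in> curv_rect a1 a2 \<Phi> bb \<Longrightarrow> 1 \<le> \<rho> z"
  shows "ennreal (a2 - a1) \<le> curve_rho_length \<rho> \<gamma>"
proof -
  have c: "continuous_on {0..1} \<gamma>" and lr: "loc_rectifiable \<gamma>"
    and inR: "\<And>t. 0 < t \<Longrightarrow> t < 1 \<Longrightarrow> \<gamma> t \<in> curv_rect a1 a2 \<Phi> bb"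
    and ends: "(\<gamma> 0 \<in> horiz_side \<Phi> bb a1 \<and> \<gamma> 1 \<in> horiz_side \<Phi> bb a2)
           \<or> (\<gamma> 0 \<in> horiz_side \<Phi> bb a2 \<and> \<gamma> 1 \<in> horiz_side \<Phi> bb a1)"
    using g by (auto simp: joining_family_def)
  have ends': "\<bar>Im (\<gamma> 1) - Im (\<gamma> 0)\<bar> = \<bar>a2 - a1\<bar>" using ends by (auto simp: horiz_side_def)
  have key: "ennreal \<bar>Im (\<gamma> v) - Im (\<gamma> u)\<bar> \<le> (\<integral>\<^sup>+ t. ennreal (\<rho> (\<gamma> t)) \<partial>arclen_measure \<gamma> u v)"
    if uv: "0 < u" "u \<le> v" "v < 1" for u v
  proof -
    have "ennreal \<bar>Im (\<gamma> v) - Im (\<gamma> u)\<bar> \<le> ennreal (cmod (\<gamma> v - \<gamma> u))"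
      by (intro ennreal_leI) (metis abs_Im_le_cmod minus_complex.simps(2))
    also have "\<dots> \<le> curve_var \<gamma> u v" by (rule var_ge_dist) (use uv in simp)
    also have "\<dots> = emeasure (arclen_measure \<gamma> u v) {u<..v}" by (rule emeasure_arclen_Ioc[OF c lr uv, symmetric])
    also have "\<dots> = (\<integral>\<^sup>+ t. indicator {u<..v} t \<partial>arclen_measure \<gamma> u v)"
      by (simp add: arclen_measure_def)
    also have "\<dots> \<le> (\<integral>\<^sup>+ t. ennreal (\<rho> (\<gamma> t)) \<partial>arclen_measure \<gamma> u v)"
      by (intro nn_integral_mono) (use rho inR uv in \<open>auto simp: indicator_def\<close>)
    finally show ?thesis .
  qed
  show ?thesis
  proof (cases "\<forall>u v. 0 < u \<longrightarrow> u \<le> v \<longrightarrow> v < 1 \<longrightarrow>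
            (\<lambda>t. \<rho> (\<gamma> t)) \<in> borel_measurable (arclen_measure \<gamma> u v)")
    case False then show ?thesis by (auto simp: curve_rho_length_def)
  next
    case True
    have "ennreal (a2 - a1) \<le> (SUP (u, v) \<in> {(u, v). 0 < u \<and> u \<le> v \<and> v < 1}.
              \<integral>\<^sup>+ t. ennreal (\<rho> (\<gamma> t)) \<partial>(arclen_measure \<gamma> u v))"
    proof (subst le_SUP_iff, intro allI impI)
      fix y assume y: "y < ennreal (a2 - a1)"
      then obtain r where r: "y = ennreal r" "0 \<le> r" "r < a2 - a1"
        by (cases y) (auto simp: ennreal_less_iff top_unique)
      define e where "e = (a2 - a1 - r) / 2"
      have e: "e > 0" using r by (simp add: e_def)
      have cIm: "continuous_on {0..1} (\<lambda>t. Im (\<gamma> t))" by (intro continuous_intros c)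
      obtain d0 where d0: "d0 > 0" "\<And>x'. x' \<in> {0..1} \<Longrightarrow> dist x' 0 < d0 \<Longrightarrow> dist (Im (\<gamma> x')) (Im (\<gamma> 0)) < e"
        using cIm e unfolding continuous_on_iff by (metis atLeastAtMost_iff order_refl zero_le_one)
      obtain d1 where d1: "d1 > 0" "\<And>x'. x' \<in> {0..1} \<Longrightarrow> dist x' 1 < d1 \<Longrightarrow> dist (Im (\<gamma> x')) (Im (\<gamma> 1)) < e"
        using cIm e unfolding continuous_on_iff by (metis atLeastAtMost_iff order_refl zero_le_one)
      define u where "u = min (d0/2) (min (d1/2) (1/2))"
      define v where "v = 1 - u"
      have u: "0 < u" "u \<le> v" "v < 1" "u < d0" "1 - v < d1" "u \<le> 1/2" using d0 d1 by (auto simp: u_def v_def)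
      have A: "\<bar>Im (\<gamma> u) - Im (\<gamma> 0)\<bar> < e" using d0(2)[of u] u by (auto simp: dist_real_def)
      have B: "\<bar>Im (\<gamma> v) - Im (\<gamma> 1)\<bar> < e" using d1(2)[of v] u by (auto simp: dist_real_def)
      have tri: "\<bar>Im (\<gamma> 1) - Im (\<gamma> 0)\<bar> \<le> \<bar>Im (\<gamma> v) - Im (\<gamma> u)\<bar> + \<bar>Im (\<gamma> u) - Im (\<gamma> 0)\<bar> + \<bar>Im (\<gamma> v) - Im (\<gamma> 1)\<bar>"
        by arith
      have "r < \<bar>Im (\<gamma> v) - Im (\<gamma> u)\<bar>" using A B ends' r tri unfolding e_def
        by (simp add: abs_of_pos)
      then have "y < ennreal \<bar>Im (\<gamma> v) - Im (\<gamma> u)\<bar>" using r by (simp add: ennreal_lessI)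
      also have "\<dots> \<le> (\<integral>\<^sup>+ t. ennreal (\<rho> (\<gamma> t)) \<partial>arclen_measure \<gamma> u v)" by (rule key) (use u in auto)
      finally show "\<exists>i\<in>{(u, v). 0 < u \<and> u \<le> v \<and> v < 1}. y < (case i of (u, v) \<Rightarrow>
              \<integral>\<^sup>+ t. ennreal (\<rho> (\<gamma> t)) \<partial>(arclen_measure \<gamma> u v))"
        using u by (intro bexI[of _ "(u,v)"]) auto
    qed
    then show ?thesis using True by (simp add: curve_rho_length_def)
  qed
qed



lemma rect0_box: "curv_rect a1 a2 (\<lambda>_. 0) bb = box (Complex 0 a1) (Complex bb a2)"
  by (auto simp: curv_rect_def box_def Basis_complex_def)

lemma emeasure_rect0:
  assumes "a1 \<le> a2" "0 \<le> bb"
  shows "emeasure lborel (curv_rect a1 a2 (\<lambda>_. 0) bb) = ennreal (bb * (a2 - a1))"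
  unfolding rect0_box using assms
  by (subst emeasure_lborel_box) (auto simp: Basis_complex_def)

lemma extremal_length_lower:
  assumes a: "a1 < a2" and b: "0 < bb"
  shows "ennreal ((a2 - a1) / bb) \<le> extremal_length (joining_family a1 a2 (\<lambda>_. 0) bb)"
proof -
  define R where "R = curv_rect a1 a2 (\<lambda>_. 0) bb"
  define \<rho> where "\<rho> = (indicator R :: complex \<Rightarrow> real)"
  have Rb: "R \<in> sets borel" unfolding R_def rect0_box by simp
  have area: "rho_area \<rho> = ennreal (bb * (a2 - a1))"
  proof -
    have "rho_area \<rho> = (\<integral>\<^sup>+ z. indicator R z \<partial>lebesgue)"
      unfolding rho_area_def \<rho>_def by (intro nn_integral_cong) (auto simp: indicator_def)
    also have "\<dots> = emeasure lborel R" using Rb by (simp add: nn_integral_completion)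
    also have "\<dots> = ennreal (bb * (a2 - a1))" unfolding R_def using a b by (intro emeasure_rect0) auto
    finally show ?thesis .
  qed
  have adm: "admissible_metric \<rho>"
    unfolding admissible_metric_def
  proof (intro conjI)
    show "\<forall>z. 0 \<le> \<rho> z" by (simp add: \<rho>_def)
    show "\<rho> \<in> borel_measurable lebesgue" unfolding \<rho>_def using Rb
      by (intro measurable_completion) simp
    show "0 < rho_area \<rho>" using area a b by simp
    show "rho_area \<rho> < \<infinity>" using area by simp
  qed
  have L: "ennreal (a2 - a1) \<le> family_rho_length (joining_family a1 a2 (\<lambda>_. 0) bb) \<rho>"
    unfolding family_rho_length_def
    by (intro INF_greatest curve_len_lower) (auto simp: \<rho>_def R_def)
  have "ennreal ((a2 - a1) / bb) = (ennreal (a2 - a1))\<^sup>2 / rho_area \<rho>"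
  proof -
    have "(ennreal (a2 - a1))\<^sup>2 / rho_area \<rho> = ennreal ((a2 - a1)\<^sup>2) / ennreal (bb * (a2 - a1))"
      unfolding area using a by (simp add: ennreal_power)
    also have "\<dots> = ennreal ((a2 - a1)\<^sup>2 / (bb * (a2 - a1)))" using a b by (intro divide_ennreal) auto
    also have "(a2 - a1)\<^sup>2 / (bb * (a2 - a1)) = (a2 - a1) / bb" using a b by (simp add: power2_eq_square)
    finally show ?thesis by simp
  qed
  also have "\<dots> \<le> (family_rho_length (joining_family a1 a2 (\<lambda>_. 0) bb) \<rho>)\<^sup>2 / rho_area \<rho>"
    by (intro divide_right_mono_ennreal power_mono L) simp
  also have "\<dots> \<le> extremal_length (joining_family a1 a2 (\<lambda>_. 0) bb)"
    unfolding extremal_length_def using adm by (intro SUP_upper) simp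
  finally show ?thesis .
qed



lemma interval_measure_dominated:
  fixes F :: "real \<Rightarrow> real" and K :: real
  assumes mono: "\<And>x y. x \<le> y \<Longrightarrow> F x \<le> F y"
    and lip: "\<And>x y. x \<le> y \<Longrightarrow> F y - F x \<le> K * (y - x)"
  shows "interval_measure F \<le> density lborel (\<lambda>_. ennreal K)"
proof -
  define G where "G x = K * x - F x" for x
  have K0: "0 \<le> K" using lip[of 0 1] mono[of 0 1] by simp
  have monoG: "G x \<le> G y" if "x \<le> y" for x y using lip[OF that] by (simp add: G_def algebra_simps)
  have contF: "continuous_on UNIV F"
  proof (rule continuous_onI)
    fix x and e :: real assume e: "0 < e"
    have K0: "0 \<le> K" using lip[of 0 1] mono[of 0 1] by simp
    show "\<exists>d>0. \<forall>x'\<in>UNIV. dist x' x < d \<longrightarrow> dist (F x') (F x) \<le> e"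
    proof (intro exI[of _ "e / (K + 1)"] conjI ballI impI)
      show "0 < e / (K + 1)" using e K0 by simp
      fix x' assume d: "dist x' x < e / (K + 1)"
      have "\<bar>F x' - F x\<bar> \<le> K * \<bar>x' - x\<bar>"
        using lip[of x x'] lip[of x' x] mono[of x x'] mono[of x' x] by (cases "x \<le> x'") (auto simp: abs_if)
      also have "\<dots> \<le> (K + 1) * \<bar>x' - x\<bar>" by (simp add: mult_right_mono)
      also have "\<dots> \<le> e" using d K0 by (simp add: dist_real_def field_simps)
      finally show "dist (F x') (F x) \<le> e" by (simp add: dist_real_def)
    qed
  qed
  have rcF: "continuous (at_right a) F" for a
  proof -
    have "isCont F a" using contF by (simp add: continuous_on_eq_continuous_at)
    then show ?thesis by (rule continuous_at_imp_continuous_at_within)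
  qed
  have rcG: "continuous (at_right a) G" for a
    unfolding G_def by (intro continuous_intros rcF)
  define \<mu> where "\<mu> = interval_measure F"
  define \<nu> where "\<nu> = interval_measure G"
  define S where "S = measure_of UNIV (sets borel) (\<lambda>A. emeasure \<mu> A + emeasure \<nu> A)"
  have sa: "sigma_algebra UNIV (sets borel)"
    by (metis sets.sigma_algebra_axioms space_borel)
  have emS: "emeasure S A = emeasure \<mu> A + emeasure \<nu> A" if "A \<in> sets borel" for A
    unfolding S_def
  proof (rule emeasure_measure_of_sigma[OF sa _ _ that])
    show "positive (sets borel) (\<lambda>A. emeasure \<mu> A + emeasure \<nu> A)" by (simp add: positive_def)
    show "countably_additive (sets borel) (\<lambda>A. emeasure \<mu> A + emeasure \<nu> A)"
      unfolding countably_additive_def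
    proof (intro allI impI)
      fix A :: "nat \<Rightarrow> real set" assume A: "range A \<subseteq> sets borel" "disjoint_family A"
      have "(\<Sum>i. emeasure \<mu> (A i) + emeasure \<nu> (A i)) = (\<Sum>i. emeasure \<mu> (A i)) + (\<Sum>i. emeasure \<nu> (A i))"
        by (metis suminf_add summableI)
      also have "\<dots> = emeasure \<mu> (\<Union>i. A i) + emeasure \<nu> (\<Union>i. A i)"
        using A by (simp add: suminf_emeasure \<mu>_def \<nu>_def)
      finally show "(\<Sum>i. emeasure \<mu> (A i) + emeasure \<nu> (A i)) = emeasure \<mu> (\<Union>i. A i) + emeasure \<nu> (\<Union>i. A i)" .
    qed
  qed
  define D :: "real measure" where "D = density lborel (\<lambda>_. ennreal K)"
  have Ioc_eq: "emeasure S {a<..b} = emeasure D {a<..b}" for a b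
  proof (cases "a \<le> b")
    case True
    have "emeasure S {a<..b} = ennreal (F b - F a) + ennreal (G b - G a)"
      using True by (simp add: emS \<mu>_def \<nu>_def emeasure_interval_measure_Ioc mono monoG rcF rcG)
    also have "\<dots> = ennreal (K * (b - a))"
      using True mono[OF True] monoG[OF True] by (simp add: ennreal_plus[symmetric] G_def algebra_simps del: ennreal_plus)
    also have "\<dots> = emeasure D {a<..b}"
      using True K0 by (simp add: D_def emeasure_density nn_integral_cmult_indicator ennreal_mult)
    finally show ?thesis .
  next
    case False then show ?thesis by simp
  qed
  have SD: "S = D"
  proof (rule measure_eqI_generator_eq[where E="range (\<lambda>(a, b). {a<..b})" and \<Omega>=UNIV and A="\<lambda>i. {- real i<..real i}"])
    show "Int_stable (range (\<lambda>(a, b). {a<..b::real}))"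
    proof (rule Int_stableI)
      fix A B assume "A \<in> range (\<lambda>(a, b). {a<..b::real})" "B \<in> range (\<lambda>(a, b). {a<..b::real})"
      then obtain a b c d where "A = {a<..b}" "B = {c<..d}" by auto
      then have "A \<inter> B = {max a c<..min b d}" by auto
      then show "A \<inter> B \<in> range (\<lambda>(a, b). {a<..b})" by auto
    qed
    show "range (\<lambda>(a, b). {a<..b::real}) \<subseteq> Pow UNIV" by auto
    show "\<And>X. X \<in> range (\<lambda>(a, b). {a<..b}) \<Longrightarrow> emeasure S X = emeasure D X" using Ioc_eq by auto
    show "sets S = sigma_sets UNIV (range (\<lambda>(a, b). {a<..b}))"
      unfolding S_def by (simp add: borel_sigma_sets_Ioc sigma_sets_sigma_sets_eq)
    show "sets D = sigma_sets UNIV (range (\<lambda>(a, b). {a<..b}))"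
      unfolding D_def by (simp add: borel_sigma_sets_Ioc)
    show "range (\<lambda>i. {- real i<..real i}) \<subseteq> range (\<lambda>(a, b). {a<..b})" by auto
    show "(\<Union>i. {- real i<..real i}) = UNIV"
    proof (intro set_eqI iffI)
      fix x :: real
      obtain n :: nat where "\<bar>x\<bar> < n" using reals_Archimedean2 by blast
      then show "x \<in> (\<Union>i. {- real i<..real i})" by (intro UN_I[of n]) auto
    qed auto
    show "emeasure S {- real i<..real i} \<noteq> \<infinity>" for i using Ioc_eq[of "- real i" "real i"]
      by (simp add: D_def emeasure_density nn_integral_cmult_indicator ennreal_mult_eq_top_iff)
  qed
  show ?thesis
  proof (subst le_measure)
    show "sets (interval_measure F) = sets (density lborel (\<lambda>_. ennreal K))" by simp
    show "\<forall>A\<in>sets (interval_measure F). emeasure (interval_measure F) A \<le> emeasure (density lborel (\<lambda>_. ennreal K)) A"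
    proof
      fix A assume A: "A \<in> sets (interval_measure F)"
      have "emeasure (interval_measure F) A \<le> emeasure \<mu> A + emeasure \<nu> A" by (simp add: \<mu>_def)
      also have "\<dots> = emeasure D A" using A SD[symmetric] emS[of A] by simp
      finally show "emeasure (interval_measure F) A \<le> emeasure (density lborel (\<lambda>_. ennreal K)) A"
        by (simp add: D_def)
    qed
  qed
qed



lemma borel_measurable_Complex[measurable]:
  assumes [measurable]: "f \<in> borel_measurable M" "g \<in> borel_measurable M"
  shows "(\<lambda>x. Complex (f x) (g x)) \<in> borel_measurable M"
  unfolding Complex_eq by measurable

lemma lborel_complex_eq:
  "(lborel :: complex measure) = distr (lborel \<Otimes>\<^sub>M lborel) borel (\<lambda>p. Complex (fst p) (snd p))"
proof (rule lborel_eqI)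
  fix l u :: complex assume le: "\<And>b. b \<in> Basis \<Longrightarrow> l \<bullet> b \<le> u \<bullet> b"
  have le': "Re l \<le> Re u" "Im l \<le> Im u" using le[of 1] le[of \<i>] by auto
  have pre: "(\<lambda>p. Complex (fst p) (snd p)) -` box l u \<inter> space (lborel \<Otimes>\<^sub>M lborel) =
      {Re l<..<Re u} \<times> {Im l<..<Im u}"
    by (auto simp: box_def Basis_complex_def space_pair_measure)
  have "emeasure (distr (lborel \<Otimes>\<^sub>M lborel) borel (\<lambda>p. Complex (fst p) (snd p))) (box l u)
      = emeasure (lborel \<Otimes>\<^sub>M lborel) ({Re l<..<Re u} \<times> {Im l<..<Im u})"
    by (subst emeasure_distr) (auto simp: pre)
  also have "\<dots> = ennreal (Re u - Re l) * ennreal (Im u - Im l)"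
    using le' by (simp add: lborel.emeasure_pair_measure_Times)
  also have "\<dots> = ennreal (\<Prod>b\<in>Basis. (u - l) \<bullet> b)"
    using le' by (simp add: Basis_complex_def ennreal_mult)
  finally show "emeasure (distr (lborel \<Otimes>\<^sub>M lborel) borel (\<lambda>p. Complex (fst p) (snd p))) (box l u) =
      ennreal (\<Prod>b\<in>Basis. (u - l) \<bullet> b)" .
qed simp

lemma complex_nn_integral_iter:
  fixes f :: "complex \<Rightarrow> ennreal"
  assumes [measurable]: "f \<in> borel_measurable borel"
  shows "(\<integral>\<^sup>+z. f z \<partial>lborel) = (\<integral>\<^sup>+x. \<integral>\<^sup>+y. f (Complex x y) \<partial>lborel \<partial>lborel)"
proof -
  have "(\<integral>\<^sup>+z. f z \<partial>lborel) = (\<integral>\<^sup>+p. f (Complex (fst p) (snd p)) \<partial>(lborel \<Otimes>\<^sub>M lborel))"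
    by (subst lborel_complex_eq) (simp add: nn_integral_distr)
  also have "\<dots> = (\<integral>\<^sup>+x. \<integral>\<^sup>+y. f (Complex x y) \<partial>lborel \<partial>lborel)"
    using lborel.nn_integral_fst[of "\<lambda>p. f (Complex (fst p) (snd p))" lborel] by simp
  finally show ?thesis .
qed

lemma shear_nn_integral:
  fixes f :: "complex \<Rightarrow> ennreal" and P :: "real \<Rightarrow> real"
  assumes [measurable]: "f \<in> borel_measurable borel" "P \<in> borel_measurable borel"
  shows "(\<integral>\<^sup>+x. \<integral>\<^sup>+y. f (Complex (x + P y) y) \<partial>lborel \<partial>lborel) = (\<integral>\<^sup>+z. f z \<partial>lborel)"
proof -
  have "(\<integral>\<^sup>+x. \<integral>\<^sup>+y. f (Complex (x + P y) y) \<partial>lborel \<partial>lborel)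
      = (\<integral>\<^sup>+y. \<integral>\<^sup>+x. f (Complex (x + P y) y) \<partial>lborel \<partial>lborel)"
    by (rule lborel_pair.Fubini'[symmetric]) measurable
  also have "\<dots> = (\<integral>\<^sup>+y. \<integral>\<^sup>+x. f (Complex x y) \<partial>lborel \<partial>lborel)"
  proof (rule nn_integral_cong)
    fix y
    show "(\<integral>\<^sup>+x. f (Complex (x + P y) y) \<partial>lborel) = (\<integral>\<^sup>+x. f (Complex x y) \<partial>lborel)"
      using nn_integral_real_affine[of "\<lambda>x. f (Complex x y)" 1 "P y"] by (simp add: add.commute)
  qed
  also have "\<dots> = (\<integral>\<^sup>+x. \<integral>\<^sup>+y. f (Complex x y) \<partial>lborel \<partial>lborel)"
    by (rule lborel_pair.Fubini') measurable
  also have "\<dots> = (\<integral>\<^sup>+z. f z \<partial>lborel)" by (rule complex_nn_integral_iter[symmetric]) simp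
  finally show ?thesis .
qed


lemma measurable_completion_AE_real:
  fixes f h :: "'a \<Rightarrow> real"
  assumes h: "h \<in> borel_measurable M" and ae: "AE x in M. f x = h x"
  shows "f \<in> borel_measurable (completion M)"
proof -
  from ae obtain N where N: "N \<in> null_sets M" "{x\<in>space M. \<not> f x = h x} \<subseteq> N" by (auto elim!: AE_E)
  show ?thesis
  proof (rule measurableI)
    fix x assume "x \<in> space (completion M)" then show "f x \<in> space borel" by simp
  next
    fix A :: "real set" assume A: "A \<in> sets borel"
    have eq: "f -` A \<inter> space (completion M) = ((h -` A \<inter> space M) - N) \<union> ((f -` A \<inter> space M) \<inter> N)"
    proof (intro set_eqI iffI)
      fix x assume "x \<in> f -` A \<inter> space (completion M)"
      then show "x \<in> ((h -` A \<inter> space M) - N) \<union> ((f -` A \<inter> space M) \<inter> N)"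
        using N(2) by (cases "x \<in> N") auto
    next
      fix x assume "x \<in> ((h -` A \<inter> space M) - N) \<union> ((f -` A \<inter> space M) \<inter> N)"
      then show "x \<in> f -` A \<inter> space (completion M)" using N(2) by auto
    qed
    have "h -` A \<inter> space M \<in> sets M" using h A by (rule measurable_sets)
    then have "(h -` A \<inter> space M) - N \<in> sets M" using N(1) by blast
    moreover have "(f -` A \<inter> space M) \<inter> N \<in> null_sets (completion M)"
      by (rule null_sets_completion_subset[of _ N]) (use N(1) null_sets_completionI in auto)
    ultimately show "f -` A \<inter> space (completion M) \<in> sets (completion M)"
      unfolding eq by auto
  qed
qed
lemma curve_lip:
  fixes P :: "real \<Rightarrow> real" and a1 a2 C x :: real
  assumes lipP: "\<And>y y'. a1 < y \<Longrightarrow> y \<le> y' \<Longrightarrow> y' < a2 \<Longrightarrow> \<bar>P y' - P y\<bar> \<le> C * (y' - y)"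
    and a: "a1 < a2"
  defines "\<gamma> \<equiv> (\<lambda>t. Complex (x + P (a1 + (a2 - a1) * t)) (a1 + (a2 - a1) * t))"
  assumes st: "0 < s" "s \<le> t" "t < 1"
  shows "cmod (\<gamma> t - \<gamma> s) \<le> (sqrt (1 + C\<^sup>2) * (a2 - a1)) * (t - s)"
proof -
  define h where "h = a2 - a1"
  have h: "h > 0" using a by (simp add: h_def)
  define ys where "ys = a1 + h * s"
  define yt where "yt = a1 + h * t"
  have "0 < h * s" using h st by simp
  moreover have "h * s \<le> h * t" using h st by (intro mult_left_mono) auto
  moreover have "h * t < h * 1" using h st by (intro mult_strict_left_mono) auto
  ultimately have yy: "a1 < ys" "ys \<le> yt" "yt < a2" by (auto simp: ys_def yt_def h_def)
  have d: "yt - ys = h * (t - s)" by (simp add: ys_def yt_def algebra_simps)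
  have lp: "\<bar>P yt - P ys\<bar> \<le> C * (h * (t - s))" using lipP[OF yy] d by simp
  have "(P yt - P ys)\<^sup>2 = \<bar>P yt - P ys\<bar>\<^sup>2" by simp
  also have "\<dots> \<le> (C * (h * (t - s)))\<^sup>2" using lp by (intro power_mono) auto
  finally have "(P yt - P ys)\<^sup>2 \<le> (C * (h * (t - s)))\<^sup>2" .
  moreover have "(C * (h * (t - s)))\<^sup>2 = C\<^sup>2 * (h * (t - s))\<^sup>2" by (simp add: power_mult_distrib)
  moreover have "(sqrt (1 + C\<^sup>2) * h * (t - s))\<^sup>2 = (1 + C\<^sup>2) * (h * (t - s))\<^sup>2"
    by (simp add: power_mult_distrib)
  ultimately have "(P yt - P ys)\<^sup>2 + (h * (t - s))\<^sup>2 \<le> (sqrt (1 + C\<^sup>2) * h * (t - s))\<^sup>2"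
    by (simp add: algebra_simps)
  moreover have "cmod (\<gamma> t - \<gamma> s) = sqrt ((P yt - P ys)\<^sup>2 + (h * (t - s))\<^sup>2)"
    unfolding \<gamma>_def by (simp add: cmod_def ys_def yt_def h_def algebra_simps)
  moreover have "0 \<le> sqrt (1 + C\<^sup>2) * h * (t - s)" using h st by simp
  ultimately have "cmod (\<gamma> t - \<gamma> s) \<le> sqrt ((sqrt (1 + C\<^sup>2) * h * (t - s))\<^sup>2)"
    by (simp only: real_sqrt_le_mono)
  also have "\<dots> = sqrt (1 + C\<^sup>2) * h * (t - s)" using \<open>0 \<le> sqrt (1 + C\<^sup>2) * h * (t - s)\<close> by simp
  finally have "cmod (\<gamma> t - \<gamma> s) \<le> sqrt (1 + C\<^sup>2) * h * (t - s)" .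
  then show ?thesis by (simp add: h_def)
qed



lemma clamp_lip: "x \<le> y \<Longrightarrow> u \<le> v \<Longrightarrow> clampuv u v y - clampuv u v x \<le> y - x"
  by (auto simp: clampuv_def)

lemma curve_bound:
  fixes P :: "real \<Rightarrow> real" and g :: "complex \<Rightarrow> ennreal" and \<rho> :: "complex \<Rightarrow> real" and N :: "complex set"
  assumes a: "a1 < a2"
    and Pc: "continuous_on UNIV P"
    and lipP: "\<And>y y'. a1 < y \<Longrightarrow> y \<le> y' \<Longrightarrow> y' < a2 \<Longrightarrow> \<bar>P y' - P y\<bar> \<le> C * (y' - y)"
    and g[measurable]: "g \<in> borel_measurable borel"
    and rho0: "\<And>z. 0 \<le> \<rho> z"
    and Nb[measurable]: "N \<in> sets borel"
    and gN: "\<And>z. z \<notin> N \<Longrightarrow> ennreal (\<rho> z) = g z"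
    and AEt: "AE t in lborel. Complex (x + P (a1 + (a2 - a1) * t)) (a1 + (a2 - a1) * t) \<notin> N"
  shows "curve_rho_length \<rho> (\<lambda>t. Complex (x + P (a1 + (a2 - a1) * t)) (a1 + (a2 - a1) * t))
         \<le> ennreal (sqrt (1 + C\<^sup>2)) * (\<integral>\<^sup>+y. indicator {a1..a2} y * g (Complex (x + P y) y) \<partial>lborel)"
proof -
  define h where "h = a2 - a1"
  have h: "h > 0" using a by (simp add: h_def)
  define \<gamma> where "\<gamma> = (\<lambda>t. Complex (x + P (a1 + h * t)) (a1 + h * t))"
  define K where "K = sqrt (1 + C\<^sup>2) * h"
  have K: "K > 0" unfolding K_def using h by (intro mult_pos_pos) (auto intro: add_pos_nonneg)
  have Pm[measurable]: "P \<in> borel_measurable borel" by (rule borel_measurable_continuous_onI[OF Pc])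
  have gm[measurable]: "\<gamma> \<in> borel_measurable borel" unfolding \<gamma>_def by measurable
  have gc: "continuous_on {0..1} \<gamma>" unfolding \<gamma>_def Complex_eq
    by (intro continuous_intros continuous_on_compose2[OF Pc]) auto
  have lipg: "cmod (\<gamma> t - \<gamma> s) \<le> K * (t - s)" if "0 < s" "s \<le> t" "t < 1" for s t
    using curve_lip[OF lipP a, where x=x and s=s and t=t] that unfolding \<gamma>_def K_def h_def by simp
  have Enull: "{t. \<gamma> t \<in> N} \<in> null_sets lborel"
  proof -
    have "{t. \<gamma> t \<in> N} \<in> sets lborel" by measurable
    moreover have "AE t in lborel. t \<notin> {t. \<gamma> t \<in> N}" using AEt by (simp add: \<gamma>_def h_def)
    ultimately show ?thesis by (simp add: AE_iff_null_sets)
  qed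
  define J where "J = (\<integral>\<^sup>+t. indicator {0..1} t * g (\<gamma> t) \<partial>lborel)"
  have main: "(\<lambda>t. \<rho> (\<gamma> t)) \<in> borel_measurable (arclen_measure \<gamma> u v) \<and>
      (\<integral>\<^sup>+ t. ennreal (\<rho> (\<gamma> t)) \<partial>arclen_measure \<gamma> u v) \<le> ennreal K * J"
    if uv: "0 < u" "u \<le> v" "v < 1" for u v
  proof -
    define F where "F = arclen_fun \<gamma> u v"
    have "curve_var \<gamma> u v \<le> ennreal (K * (v - u))"
    proof (rule var_lipschitz[OF uv(2)])
      fix s t assume st: "u \<le> s" "s \<le> t" "t \<le> v"
      have "0 < s" "t < 1" using st uv by linarith+
      then show "cmod (\<gamma> t - \<gamma> s) \<le> K * (t - s)" using lipg st(2) by blast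
    qed
    then have fin: "curve_var \<gamma> u v < \<infinity>"
      by (rule le_less_trans) simp
    have Fmono: "\<And>x y. x \<le> y \<Longrightarrow> F x \<le> F y" unfolding F_def by (rule arclen_mono[OF uv(2) fin])
    have Flip: "F y - F x \<le> K * (y - x)" if xy: "x \<le> y" for x y
    proof -
      let ?a = "clampuv u v x" and ?b = "clampuv u v y"
      have ab: "u \<le> ?a" "?a \<le> ?b" "?b \<le> v" using uv xy by (auto simp: clampuv_def)
      have "curve_var \<gamma> ?a ?b \<le> ennreal (K * (?b - ?a))"
      proof (rule var_lipschitz[OF ab(2)])
        fix s t assume st: "?a \<le> s" "s \<le> t" "t \<le> ?b"
        have "0 < s" "t < 1" using st uv ab by linarith+
        then show "cmod (\<gamma> t - \<gamma> s) \<le> K * (t - s)" using lipg st(2) by blast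
      qed
      then have "enn2real (curve_var \<gamma> ?a ?b) \<le> K * (?b - ?a)"
        using K ab by (intro enn2real_leI) auto
      also have "\<dots> \<le> K * (y - x)" using K clamp_lip[OF xy uv(2)] by (intro mult_left_mono) auto
      finally show ?thesis unfolding F_def using arclen_diff[OF uv(2) fin xy] by simp
    qed
    have rc: "\<And>a. continuous (at_right a) F" unfolding F_def
      by (rule arclen_rcont[OF uv(2) fin]) (use cont_right_from_on[OF gc] uv in auto)
    have dom: "interval_measure F \<le> density lborel (\<lambda>_. ennreal K)"
      by (rule interval_measure_dominated[OF Fmono Flip])
    have Enull': "{t. \<gamma> t \<in> N} \<in> null_sets (interval_measure F)"
    proof -
      have Es: "{t. \<gamma> t \<in> N} \<in> sets borel" by measurable
      have "emeasure (interval_measure F) {t. \<gamma> t \<in> N} \<le> emeasure (density lborel (\<lambda>_. ennreal K)) {t. \<gamma> t \<in> N}"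
        using dom by (intro le_measureD3) auto
      also have "\<dots> = ennreal K * emeasure lborel {t. \<gamma> t \<in> N}"
        using Es by (simp add: emeasure_density nn_integral_cmult_indicator)
      also have "\<dots> = 0" using Enull by (simp add: null_sets_def)
      finally show ?thesis using Es by (simp add: null_sets_def)
    qed
    have AEg: "AE t in interval_measure F. ennreal (\<rho> (\<gamma> t)) = g (\<gamma> t)"
      by (rule AE_I'[OF Enull']) (use gN in auto)
    have outside: "- {u<..v} \<in> null_sets (interval_measure F)"
    proof (rule interval_measure_outside_null[OF Fmono rc])
      show "F x = F u" if "x \<le> u" for x using that uv by (simp add: F_def arclen_fun_def)
      show "F x = F v" if "v \<le> x" for x using that uv by (simp add: F_def arclen_fun_def)
    qed
    have AEin: "AE t in interval_measure F. t \<in> {u<..v}"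
      by (rule AE_I'[OF outside]) auto
    have meas: "(\<lambda>t. \<rho> (\<gamma> t)) \<in> borel_measurable (arclen_measure \<gamma> u v)"
      unfolding arclen_measure_def F_def[symmetric]
    proof (rule measurable_completion_AE_real)
      show "(\<lambda>t. enn2real (g (\<gamma> t))) \<in> borel_measurable (interval_measure F)" by measurable
      show "AE t in interval_measure F. \<rho> (\<gamma> t) = enn2real (g (\<gamma> t))"
        using AEg by eventually_elim (metis enn2real_ennreal rho0)
    qed
    have "(\<integral>\<^sup>+ t. ennreal (\<rho> (\<gamma> t)) \<partial>arclen_measure \<gamma> u v) = (\<integral>\<^sup>+ t. ennreal (\<rho> (\<gamma> t)) \<partial>interval_measure F)"
      unfolding arclen_measure_def F_def by (rule nn_integral_completion)
    also have "\<dots> = (\<integral>\<^sup>+ t. indicator {u<..v} t * g (\<gamma> t) \<partial>interval_measure F)"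
      by (rule nn_integral_cong_AE) (use AEg AEin in \<open>eventually_elim, simp\<close>)
    also have "\<dots> \<le> (\<integral>\<^sup>+ t. indicator {u<..v} t * g (\<gamma> t) \<partial>density lborel (\<lambda>_. ennreal K))"
      by (rule nn_integral_mono_measure[OF _ dom]) simp
    also have "\<dots> = (\<integral>\<^sup>+ t. ennreal K * (indicator {u<..v} t * g (\<gamma> t)) \<partial>lborel)"
      by (rule nn_integral_density) measurable
    also have "\<dots> = ennreal K * (\<integral>\<^sup>+ t. indicator {u<..v} t * g (\<gamma> t) \<partial>lborel)"
      by (rule nn_integral_cmult) measurable
    also have "\<dots> \<le> ennreal K * J"
      unfolding J_def using uv
      by (intro mult_left_mono nn_integral_mono) (auto simp: indicator_def)
    finally show ?thesis using meas by simp
  qed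
  have "curve_rho_length \<rho> \<gamma> \<le> ennreal K * J"
    unfolding curve_rho_length_def using main
    by (auto intro!: SUP_least)
  also have "ennreal K * J = ennreal (sqrt (1 + C\<^sup>2)) * (\<integral>\<^sup>+y. indicator {a1..a2} y * g (Complex (x + P y) y) \<partial>lborel)"
  proof -
    have "(\<integral>\<^sup>+y. indicator {a1..a2} y * g (Complex (x + P y) y) \<partial>lborel)
        = ennreal \<bar>h\<bar> * (\<integral>\<^sup>+t. indicator {a1..a2} (a1 + h * t) * g (Complex (x + P (a1 + h * t)) (a1 + h * t)) \<partial>lborel)"
      by (rule nn_integral_real_affine) (use h in auto)
    also have "(\<integral>\<^sup>+t. indicator {a1..a2} (a1 + h * t) * g (Complex (x + P (a1 + h * t)) (a1 + h * t)) \<partial>lborel) = J"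
      unfolding J_def \<gamma>_def
    proof (rule nn_integral_cong)
      fix t :: real
      have e1: "0 \<le> h * t \<longleftrightarrow> 0 \<le> t" using h by (simp add: zero_le_mult_iff)
      have e2: "h * t \<le> h \<longleftrightarrow> t \<le> 1" using h by (simp add: mult_le_cancel_left1)
      have e3: "a1 + h * t \<le> a2 \<longleftrightarrow> h * t \<le> h" unfolding h_def by linarith
      have "a1 + h * t \<in> {a1..a2} \<longleftrightarrow> t \<in> {0..1}"
        using e1 e2 e3 by auto
      then show "indicator {a1..a2} (a1 + h * t) * g (Complex (x + P (a1 + h * t)) (a1 + h * t)) =
          indicator {0..1} t * g (Complex (x + P (a1 + h * t)) (a1 + h * t))"
        by (simp add: indicator_def)
    qed
    finally have "(\<integral>\<^sup>+y. indicator {a1..a2} y * g (Complex (x + P y) y) \<partial>lborel) = ennreal h * J"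
      using h by simp
    then show ?thesis using h by (simp add: K_def ennreal_mult mult.assoc)
  qed
  finally show ?thesis unfolding \<gamma>_def h_def .
qed



lemma rho_bound:
  fixes \<Phi> P :: "real \<Rightarrow> real" and \<rho> :: "complex \<Rightarrow> real"
  assumes a: "a1 < a2" and b: "0 < bb"
    and Pc: "continuous_on UNIV P" and P\<Phi>: "\<And>y. y \<in> {a1..a2} \<Longrightarrow> P y = \<Phi> y"
    and lipP: "\<And>y y'. a1 < y \<Longrightarrow> y \<le> y' \<Longrightarrow> y' < a2 \<Longrightarrow> \<bar>P y' - P y\<bar> \<le> C * (y' - y)"
    and adm: "admissible_metric \<rho>"
  shows "(family_rho_length (joining_family a1 a2 \<Phi> bb) \<rho>)\<^sup>2 / rho_area \<rho>
           \<le> ennreal ((1 + C\<^sup>2) * (a2 - a1) / bb)"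
proof -
  define h where "h = a2 - a1"
  have h: "h > 0" using a by (simp add: h_def)
  define c where "c = sqrt (1 + C\<^sup>2)"
  have c: "c > 0" unfolding c_def by (intro real_sqrt_gt_zero add_pos_nonneg) auto
  have Pm[measurable]: "P \<in> borel_measurable borel" by (rule borel_measurable_continuous_onI[OF Pc])
  define \<gamma>x where "\<gamma>x x = (\<lambda>t. Complex (x + P (a1 + (a2 - a1) * t)) (a1 + (a2 - a1) * t))" for x
  define L where "L = family_rho_length (joining_family a1 a2 \<Phi> bb) \<rho>"
  have member: "\<gamma>x x \<in> joining_family a1 a2 \<Phi> bb" if x: "0 < x" "x < bb" for x
    unfolding joining_family_def mem_Collect_eq
  proof (intro conjI)
    show "continuous_on {0..1} (\<gamma>x x)" unfolding \<gamma>x_def Complex_eq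
      by (intro continuous_intros continuous_on_compose2[OF Pc]) auto
    show "loc_rectifiable (\<gamma>x x)" unfolding loc_rectifiable_def
    proof (intro allI impI)
      fix u v :: real assume uv: "0 < u" "u \<le> v" "v < 1"
      have "curve_var (\<gamma>x x) u v \<le> ennreal ((sqrt (1 + C\<^sup>2) * (a2 - a1)) * (v - u))"
      proof (rule var_lipschitz[OF uv(2)])
        fix s t assume st: "u \<le> s" "s \<le> t" "t \<le> v"
        have "0 < s" "t < 1" using st uv by linarith+
        then show "cmod (\<gamma>x x t - \<gamma>x x s) \<le> (sqrt (1 + C\<^sup>2) * (a2 - a1)) * (t - s)"
          unfolding \<gamma>x_def using curve_lip[OF lipP a, where x=x and s=s and t=t] st(2) by simp
      qed
      then show "curve_var (\<gamma>x x) u v < \<infinity>" by (rule le_less_trans) simp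
    qed
    show "\<forall>t\<in>{0<..<1}. \<gamma>x x t \<in> curv_rect a1 a2 \<Phi> bb"
    proof
      fix t :: real assume t: "t \<in> {0<..<1}"
      have "0 < h * t" "h * t < h * 1" using h t by (auto intro: mult_strict_left_mono)
      then have y: "a1 < a1 + (a2 - a1) * t" "a1 + (a2 - a1) * t < a2" by (auto simp: h_def)
      then have "P (a1 + (a2 - a1) * t) = \<Phi> (a1 + (a2 - a1) * t)" by (intro P\<Phi>) auto
      then show "\<gamma>x x t \<in> curv_rect a1 a2 \<Phi> bb" using y x by (simp add: \<gamma>x_def curv_rect_def)
    qed
    have "P a1 = \<Phi> a1" "P a2 = \<Phi> a2" using a by (auto intro: P\<Phi>)
    then show "(\<gamma>x x 0 \<in> horiz_side \<Phi> bb a1 \<and> \<gamma>x x 1 \<in> horiz_side \<Phi> bb a2) \<or>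
        (\<gamma>x x 0 \<in> horiz_side \<Phi> bb a2 \<and> \<gamma>x x 1 \<in> horiz_side \<Phi> bb a1)"
      using x by (simp add: \<gamma>x_def horiz_side_def)
  qed
  have rho0: "\<And>z. 0 \<le> \<rho> z" and rhom: "\<rho> \<in> borel_measurable lebesgue"
    and A0: "0 < rho_area \<rho>" and Afin: "rho_area \<rho> < \<infinity>"
    using adm by (auto simp: admissible_metric_def)
  have "(\<lambda>z. ennreal (\<rho> z)) \<in> borel_measurable lebesgue" using rhom by measurable
  from completion_ex_borel_measurable[OF this] obtain g where
    g[measurable]: "g \<in> borel_measurable lborel" and aeg: "AE z in lborel. ennreal (\<rho> z) = g z"
    by blast
  have gb[measurable]: "g \<in> borel_measurable borel" using g by simp
  from aeg obtain N where N2: "{z \<in> space lborel. \<not> ennreal (\<rho> z) = g z} \<subseteq> N"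
    and N1: "N \<in> null_sets lborel"
    by (rule AE_E) (auto simp: null_sets_def)
  note N = N1 N2
  have Nb[measurable]: "N \<in> sets borel" using null_setsD2[OF N(1)] by simp
  have gN: "\<And>z. z \<notin> N \<Longrightarrow> ennreal (\<rho> z) = g z" using N(2) by auto
  have area: "rho_area \<rho> = (\<integral>\<^sup>+z. g z ^ 2 \<partial>lborel)"
  proof -
    have "rho_area \<rho> = (\<integral>\<^sup>+z. ennreal (\<rho> z) ^ 2 \<partial>lborel)"
      unfolding rho_area_def nn_integral_completion using rho0 by (simp add: ennreal_power)
    also have "\<dots> = (\<integral>\<^sup>+z. g z ^ 2 \<partial>lborel)"
      by (rule nn_integral_cong_AE) (use aeg in auto)
    finally show ?thesis .
  qed
  have AEx: "AE x in lborel. AE t in lborel. \<gamma>x x t \<notin> N"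
  proof -
    have "(\<integral>\<^sup>+x. \<integral>\<^sup>+y. indicator N (Complex (x + P y) y) \<partial>lborel \<partial>lborel) = (\<integral>\<^sup>+z. indicator N z \<partial>lborel)"
      by (rule shear_nn_integral) auto
    also have "\<dots> = 0" using N(1) by (simp add: null_sets_def)
    finally have "AE x in lborel. (\<integral>\<^sup>+y. indicator N (Complex (x + P y) y) \<partial>lborel) = 0"
      by (subst (asm) nn_integral_0_iff_AE) measurable
    then show ?thesis
    proof eventually_elim
      case (elim x)
      then have "AE y in lborel. indicator N (Complex (x + P y) y) = (0::ennreal)"
        by (subst (asm) nn_integral_0_iff_AE) measurable
      then have "AE y in lborel. Complex (x + P y) y \<notin> N"
        by eventually_elim (simp add: indicator_def split: if_splits)
      then have "AE t in lborel. Complex (x + P (a1 + (a2 - a1) * t)) (a1 + (a2 - a1) * t) \<notin> N"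
      proof -
        have pr: "Measurable.pred borel (\<lambda>y. Complex (x + P y) y \<notin> N)" by measurable
        have "a2 - a1 \<noteq> 0" using a by simp
        from AE_borel_affine[OF this pr \<open>AE y in lborel. Complex (x + P y) y \<notin> N\<close>, where t=a1]
        show ?thesis by simp
      qed
      then show ?case by (simp add: \<gamma>x_def)
    qed
  qed
  define I where "I x = (\<integral>\<^sup>+y. indicator {a1..a2} y * g (Complex (x + P y) y) \<partial>lborel)" for x
  have Lx: "AE x in lborel. indicator {0<..<bb} x * L \<le> indicator {0<..<bb} x * (ennreal c * I x)"
    using AEx
  proof eventually_elim
    case (elim x)
    show ?case
    proof (cases "x \<in> {0<..<bb}")
      case True
      have "L \<le> curve_rho_length \<rho> (\<gamma>x x)" unfolding L_def family_rho_length_def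
        by (rule INF_lower) (use member True in auto)
      also have "\<dots> \<le> ennreal c * I x"
        unfolding \<gamma>x_def I_def c_def
        by (rule curve_bound[OF a Pc lipP gb rho0 Nb gN]) (use elim in \<open>unfold \<gamma>x_def, simp\<close>)
      finally show ?thesis using True by simp
    qed simp
  qed
  define S :: "complex \<Rightarrow> ennreal" where "S z = indicator {0<..<bb} (Re z - P (Im z)) * indicator {a1..a2} (Im z)" for z :: complex
  have Sm[measurable]: "S \<in> borel_measurable borel" unfolding S_def by measurable
  have S_shear: "S (Complex (x + P y) y) = indicator {0<..<bb} x * indicator {a1..a2} y" for x y
    by (simp add: S_def)
  have step1: "ennreal bb * L \<le> ennreal c * (\<integral>\<^sup>+z. S z * g z \<partial>lborel)"
  proof -
    have "ennreal bb * L = (\<integral>\<^sup>+x. L * indicator {0<..<bb} x \<partial>lborel)"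
      using b by (simp add: nn_integral_cmult_indicator mult.commute)
    also have "\<dots> = (\<integral>\<^sup>+x. indicator {0<..<bb} x * L \<partial>lborel)" by (simp add: mult.commute)
    also have "\<dots> \<le> (\<integral>\<^sup>+x. indicator {0<..<bb} x * (ennreal c * I x) \<partial>lborel)"
      by (rule nn_integral_mono_AE[OF Lx])
    also have "\<dots> = (\<integral>\<^sup>+x. ennreal c * (\<integral>\<^sup>+y. S (Complex (x + P y) y) * g (Complex (x + P y) y) \<partial>lborel) \<partial>lborel)"
    proof (rule nn_integral_cong)
      fix x
      have "(\<integral>\<^sup>+y. S (Complex (x + P y) y) * g (Complex (x + P y) y) \<partial>lborel)
          = (\<integral>\<^sup>+y. indicator {0<..<bb} x * (indicator {a1..a2} y * g (Complex (x + P y) y)) \<partial>lborel)"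
        by (simp add: S_shear mult.assoc)
      also have "\<dots> = indicator {0<..<bb} x * I x" unfolding I_def
        by (rule nn_integral_cmult) measurable
      finally show "indicator {0<..<bb} x * (ennreal c * I x) =
          ennreal c * (\<integral>\<^sup>+y. S (Complex (x + P y) y) * g (Complex (x + P y) y) \<partial>lborel)"
        by (simp add: mult_ac)
    qed
    also have "\<dots> = ennreal c * (\<integral>\<^sup>+x. \<integral>\<^sup>+y. S (Complex (x + P y) y) * g (Complex (x + P y) y) \<partial>lborel \<partial>lborel)"
      by (rule nn_integral_cmult) measurable
    also have "(\<integral>\<^sup>+x. \<integral>\<^sup>+y. S (Complex (x + P y) y) * g (Complex (x + P y) y) \<partial>lborel \<partial>lborel)
        = (\<integral>\<^sup>+z. S z * g z \<partial>lborel)"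
      by (rule shear_nn_integral[of "\<lambda>z. S z * g z"]) measurable
    finally show ?thesis .
  qed
  have step2: "(\<integral>\<^sup>+z. S z ^ 2 \<partial>lborel) = ennreal (bb * h)"
  proof -
    have "(\<integral>\<^sup>+z. S z ^ 2 \<partial>lborel) = (\<integral>\<^sup>+z. S z \<partial>lborel)"
      by (intro nn_integral_cong) (simp add: S_def indicator_def power2_eq_square)
    also have "\<dots> = (\<integral>\<^sup>+x. \<integral>\<^sup>+y. S (Complex (x + P y) y) \<partial>lborel \<partial>lborel)"
      by (rule shear_nn_integral[symmetric]) measurable
    also have "\<dots> = (\<integral>\<^sup>+x. ennreal h * indicator {0<..<bb} x \<partial>lborel)"
    proof (rule nn_integral_cong)
      fix x
      have "(\<integral>\<^sup>+y. S (Complex (x + P y) y) \<partial>lborel) = (\<integral>\<^sup>+y. indicator {0<..<bb} x * indicator {a1..a2} y \<partial>lborel)"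
        by (simp add: S_shear)
      also have "\<dots> = indicator {0<..<bb} x * emeasure lborel {a1..a2}"
        by (rule nn_integral_cmult_indicator) simp
      also have "\<dots> = ennreal h * indicator {0<..<bb} x" using a by (simp add: h_def mult.commute)
      finally show "(\<integral>\<^sup>+y. S (Complex (x + P y) y) \<partial>lborel) = ennreal h * indicator {0<..<bb} x" .
    qed
    also have "\<dots> = ennreal h * ennreal bb" using b by (simp add: nn_integral_cmult_indicator)
    also have "\<dots> = ennreal (bb * h)" using b h by (simp add: ennreal_mult mult.commute)
    finally show ?thesis .
  qed
  have CS: "(\<integral>\<^sup>+z. S z * g z \<partial>lborel)\<^sup>2 \<le> ennreal (bb * h) * rho_area \<rho>"
    using Cauchy_Schwarz_nn_integral[of S lborel g] unfolding step2 area by simp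
  obtain A where A: "rho_area \<rho> = ennreal A" "A > 0"
    using A0 Afin by (cases "rho_area \<rho>") (auto simp: ennreal_less_zero_iff)
  have cc: "c\<^sup>2 = 1 + C\<^sup>2" unfolding c_def by simp
  have "(ennreal bb * L)\<^sup>2 \<le> (ennreal c * (\<integral>\<^sup>+z. S z * g z \<partial>lborel))\<^sup>2"
    by (rule power_mono[OF step1]) simp
  also have "\<dots> = ennreal (c\<^sup>2) * (\<integral>\<^sup>+z. S z * g z \<partial>lborel)\<^sup>2"
    using c by (simp add: power_mult_distrib ennreal_power)
  also have "\<dots> \<le> ennreal (c\<^sup>2) * (ennreal (bb * h) * ennreal A)"
    using CS A by (intro mult_left_mono) auto
  also have "\<dots> = ennreal (c\<^sup>2 * bb * h * A)"
    using b h A by (simp add: ennreal_mult[symmetric] mult.assoc)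
  finally have M: "ennreal (bb\<^sup>2) * L\<^sup>2 \<le> ennreal (c\<^sup>2 * bb * h * A)"
    using b by (simp add: power_mult_distrib ennreal_power)
  have "L\<^sup>2 = ennreal (1 / bb\<^sup>2) * (ennreal (bb\<^sup>2) * L\<^sup>2)"
    using b by (simp add: mult.assoc[symmetric] ennreal_mult[symmetric])
  also have "\<dots> \<le> ennreal (1 / bb\<^sup>2) * ennreal (c\<^sup>2 * bb * h * A)"
    by (rule mult_left_mono[OF M]) simp
  also have "\<dots> = ennreal (1 / bb\<^sup>2 * (c\<^sup>2 * bb * h * A))"
    by (rule ennreal_mult[symmetric]) (use b h A in auto)
  also have "1 / bb\<^sup>2 * (c\<^sup>2 * bb * h * A) = c\<^sup>2 * h * A / bb"
    using b by (simp add: power2_eq_square field_simps)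
  finally have M2: "L\<^sup>2 \<le> ennreal (c\<^sup>2 * h * A / bb)" .
  have "L\<^sup>2 / rho_area \<rho> = L\<^sup>2 * ennreal (1 / A)"
    using A by (simp add: divide_ennreal_def inverse_ennreal inverse_eq_divide)
  also have "\<dots> \<le> ennreal (c\<^sup>2 * h * A / bb) * ennreal (1 / A)"
    by (rule mult_right_mono[OF M2]) simp
  also have "\<dots> = ennreal (c\<^sup>2 * h * A / bb * (1 / A))"
    by (rule ennreal_mult[symmetric]) (use b h A in auto)
  also have "c\<^sup>2 * h * A / bb * (1 / A) = c\<^sup>2 * h / bb"
    using A(2) by simp
  also have "c\<^sup>2 * h / bb = (1 + C\<^sup>2) * (a2 - a1) / bb"
    using cc by (simp add: h_def)
  finally show ?thesis unfolding L_def .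
qed



theorem lemma12:
  fixes \<Phi> :: "real \<Rightarrow> real" and a1 a2 bb C :: real
  assumes "a1 < a2" and "0 < bb"
    and "continuous_on {a1..a2} \<Phi>"
    and "\<forall>y\<in>{a1<..<a2}. \<Phi> differentiable (at y)"
    and "continuous_on {a1<..<a2} (deriv \<Phi>)"
    and "\<forall>y\<in>{a1<..<a2}. \<bar>deriv \<Phi> y\<bar> \<le> C"
  shows "extremal_length (joining_family a1 a2 \<Phi> bb)
           \<le> ennreal (1 + C\<^sup>2) * extremal_length (joining_family a1 a2 (\<lambda>_. 0) bb)"
proof -
  note a = assms(1) and b = assms(2) and \<Phi>c = assms(3) and \<Phi>d = assms(4) and \<Phi>C = assms(6)
  define P where "P y = \<Phi> (max a1 (min a2 y))" for y
  have Pc: "continuous_on UNIV P" unfolding P_def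
    by (rule continuous_on_compose2[OF \<Phi>c]) (use a in \<open>auto intro!: continuous_intros\<close>)
  have P\<Phi>: "P y = \<Phi> y" if "y \<in> {a1..a2}" for y using that by (simp add: P_def)
  have lipP: "\<bar>P y' - P y\<bar> \<le> C * (y' - y)" if y: "a1 < y" "y \<le> y'" "y' < a2" for y y'
  proof (cases "y = y'")
    case True
    have "0 \<le> C" using \<Phi>C y by (meson abs_ge_zero greaterThanLessThan_iff le_less_trans not_le order.trans)
    then show ?thesis using True by simp
  next
    case False
    then have yy: "y < y'" using y by simp
    have "\<And>x. y \<le> x \<Longrightarrow> x \<le> y' \<Longrightarrow> DERIV \<Phi> x :> deriv \<Phi> x"
      using \<Phi>d y by (auto simp: DERIV_deriv_iff_real_differentiable)
    from MVT2[OF yy this] obtain z where z: "y < z" "z < y'" "\<Phi> y' - \<Phi> y = (y' - y) * deriv \<Phi> z"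
      by blast
    have "\<bar>\<Phi> y' - \<Phi> y\<bar> = (y' - y) * \<bar>deriv \<Phi> z\<bar>" using z yy by (simp add: abs_mult)
    also have "\<dots> \<le> (y' - y) * C" using \<Phi>C z y yy by (intro mult_left_mono) auto
    finally show ?thesis using y by (simp add: P\<Phi> mult.commute)
  qed
  have "extremal_length (joining_family a1 a2 \<Phi> bb) \<le> ennreal ((1 + C\<^sup>2) * (a2 - a1) / bb)"
    unfolding extremal_length_def
    by (intro SUP_least rho_bound[OF a b Pc P\<Phi> lipP]) auto
  also have "ennreal ((1 + C\<^sup>2) * (a2 - a1) / bb) = ennreal (1 + C\<^sup>2) * ennreal ((a2 - a1) / bb)"
  proof -
    have "ennreal ((1 + C\<^sup>2) * ((a2 - a1) / bb)) = ennreal (1 + C\<^sup>2) * ennreal ((a2 - a1) / bb)"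
      by (rule ennreal_mult) (use a b in auto)
    then show ?thesis by (simp add: times_divide_eq_right)
  qed
  also have "\<dots> \<le> ennreal (1 + C\<^sup>2) * extremal_length (joining_family a1 a2 (\<lambda>_. 0) bb)"
    by (intro mult_left_mono extremal_length_lower a b) simp
  finally show ?thesis .
qed

end
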